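(* Let $l>0$, $D>0$, and let $r\in C^2([0,\infty))$ satisfy $r>0$, $r'<0$ on $[0,\infty)$ and $\lim_{v\to\infty}r(v)=0$. For $j\ge0$ put $\lambda_j=(\pi j/l)^2$ and $\sigma_j=-\big[\frac{r'(1)}{1+D\lambda_j}+r(1)\big]\lambda_j$; assume there is an integer $i^c\ge1$ with $\sigma_i>0$ for $1\le i\le i^c$ and $\sigma_i\le0$ for $i>i^c$, and let $\sigma_c=\frac1D(\sqrt{-r'(1)}-\sqrt{r(1)})^2$. For $\sigma\in(0,\sigma_c)$ set $$f_0(\sigma)=-\frac{r'(1)}{Dr(1)}-\frac{\sigma}{r(1)}\ (>0),\qquad f_1=\frac{r'(1)}{Dr(1)},\qquad g_0=\frac1D,\qquad g_1=-\frac1D,$$ let $X=\{(u,v):u,v\in C^2([0,l]),\ u'=v'=0\text{ at }x=0,l\}$, let $F_\sigma$ be the inverse of $f_0(\sigma)-\frac{d^2}{dx^2}$ and $F$ the inverse of $-g_1-\frac{d^2}{dx^2}$ (both with homogeneous Neumann boundary conditions on $(0,l)$), and define the linear operator $M(\sigma)$ on $X$ by $$M(\sigma)(\tilde u,\tilde v)=\big(2f_0(\sigma)F_\sigma(\tilde u)+f_1F_\sigma(\tilde v),\ g_0F(\tilde u)\big).$$ Let $j$ be a positive integer with $\lambda_j<-\frac{r'(1)+r(1)}{Dr(1)}$ and $\sigma_j\ne\sigma_k$ for all integers $k\ne j$, and assume $\sigma_j\in(0,\sigma_c)$. Then $1$ is an eigenvalue of $M(\sigma_j)$ with algebraic multiplicity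 one.
   Context: $M(\sigma)$ is the linear part of the fixed-point reformulation $\tilde\omega=M(\sigma)\tilde\omega+H(\sigma,\tilde\omega)$ of the Neumann steady-state problem $(r(v)u)''+\sigma u(1-u)=0$, $Dv''-v+u=0$ on $(0,l)$ after shifting $(u,v)=(1+\tilde u,1+\tilde v)$. *)

theory Defs
  imports "HOL-Analysis.Analysis"
begin

text \<open>Elements of X are pairs of real functions; we use the convention that they
vanish outside [0,l] (functions on [0,l] extended by 0), so that X is a genuine
function space on [0,l].\<close>

type_synonym pairfun = "(real \<Rightarrow> real) \<times> (real \<Rightarrow> real)"

definition pzero :: pairfun where
  "pzero = (\<lambda>x. 0, \<lambda>x. 0)"

definition psub :: "pairfun \<Rightarrow> pairfun \<Rightarrow> pairfun" where
  "psub w w' = (\<lambda>x. fst w x - fst w' x, \<lambda>x. snd w x - snd w' x)"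

definition pscale :: "real \<Rightarrow> pairfun \<Rightarrow> pairfun" where
  "pscale c w = (\<lambda>x. c * fst w x, \<lambda>x. c * snd w x)"

definition neumann_C2 :: "real \<Rightarrow> (real \<Rightarrow> real) \<Rightarrow> bool" where
  "neumann_C2 l u \<longleftrightarrow>
     (\<forall>x. x \<notin> {0..l} \<longrightarrow> u x = 0) \<and>
     (\<exists>u1 u2. (\<forall>x\<in>{0..l}. (u has_real_derivative u1 x) (at x within {0..l}) \<and>
                            (u1 has_real_derivative u2 x) (at x within {0..l})) \<and>
              continuous_on {0..l} u2 \<and> u1 0 = 0 \<and> u1 l = 0)"

definition neumann_sol :: "real \<Rightarrow> real \<Rightarrow> (real \<Rightarrow> real) \<Rightarrow> (real \<Rightarrow> real) \<Rightarrow> bool" where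
  "neumann_sol l a w u \<longleftrightarrow>
     (\<forall>x. x \<notin> {0..l} \<longrightarrow> u x = 0) \<and>
     (\<exists>u1 u2. (\<forall>x\<in>{0..l}. (u has_real_derivative u1 x) (at x within {0..l}) \<and>
                            (u1 has_real_derivative u2 x) (at x within {0..l})) \<and>
              continuous_on {0..l} u2 \<and> u1 0 = 0 \<and> u1 l = 0 \<and>
              (\<forall>x\<in>{0..l}. a * u x - u2 x = w x))"

definition neumann_inv :: "real \<Rightarrow> real \<Rightarrow> (real \<Rightarrow> real) \<Rightarrow> (real \<Rightarrow> real)" where
  "neumann_inv l a w = (THE u. neumann_sol l a w u)"

definition Xspace :: "real \<Rightarrow> pairfun set" where
  "Xspace l = {w. neumann_C2 l (fst w) \<and> neumann_C2 l (snd w)}"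

definition lam :: "real \<Rightarrow> nat \<Rightarrow> real" where
  "lam l j = (pi * real j / l)^2"

definition sig :: "(real \<Rightarrow> real) \<Rightarrow> (real \<Rightarrow> real) \<Rightarrow> real \<Rightarrow> real \<Rightarrow> nat \<Rightarrow> real" where
  "sig r r' D l j = - (r' 1 / (1 + D * lam l j) + r 1) * lam l j"

definition sig_c :: "(real \<Rightarrow> real) \<Rightarrow> (real \<Rightarrow> real) \<Rightarrow> real \<Rightarrow> real" where
  "sig_c r r' D = (1 / D) * (sqrt (- r' 1) - sqrt (r 1))^2"

definition f0 :: "(real \<Rightarrow> real) \<Rightarrow> (real \<Rightarrow> real) \<Rightarrow> real \<Rightarrow> real \<Rightarrow> real" where
  "f0 r r' D \<sigma> = - r' 1 / (D * r 1) - \<sigma> / r 1"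

definition f1 :: "(real \<Rightarrow> real) \<Rightarrow> (real \<Rightarrow> real) \<Rightarrow> real \<Rightarrow> real" where
  "f1 r r' D = r' 1 / (D * r 1)"

definition g0 :: "real \<Rightarrow> real" where "g0 D = 1 / D"
definition g1 :: "real \<Rightarrow> real" where "g1 D = - 1 / D"

definition Mop :: "(real \<Rightarrow> real) \<Rightarrow> (real \<Rightarrow> real) \<Rightarrow> real \<Rightarrow> real \<Rightarrow> real \<Rightarrow> pairfun \<Rightarrow> pairfun" where
  "Mop r r' D l \<sigma> w =
     (let F\<sigma> = neumann_inv l (f0 r r' D \<sigma>); F = neumann_inv l (- g1 D) in
      (\<lambda>x. 2 * f0 r r' D \<sigma> * F\<sigma> (fst w) x + f1 r r' D * F\<sigma> (snd w) x,
       \<lambda>x. g0 D * F (fst w) x))"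

definition gen_eigenspace :: "pairfun set \<Rightarrow> (pairfun \<Rightarrow> pairfun) \<Rightarrow> real \<Rightarrow> pairfun set" where
  "gen_eigenspace X T \<mu> = {w \<in> X. \<exists>k. ((\<lambda>z. psub (pscale \<mu> z) (T z)) ^^ k) w = pzero}"

definition eigenvalue_alg_mult_one :: "pairfun set \<Rightarrow> (pairfun \<Rightarrow> pairfun) \<Rightarrow> real \<Rightarrow> bool" where
  "eigenvalue_alg_mult_one X T \<mu> \<longleftrightarrow>
     (\<exists>w\<in>X. w \<noteq> pzero \<and> T w = pscale \<mu> w) \<and>
     (\<exists>w0. w0 \<noteq> pzero \<and> gen_eigenspace X T \<mu> = range (\<lambda>c. pscale c w0))"

end

theory Submission
  imports Defs "HOL-Analysis.Analysis"
begin

definition C2N :: "real \<Rightarrow> (real\<Rightarrow>real) \<Rightarrow> (real\<Rightarrow>real) \<Rightarrow> (real\<Rightarrow>real) \<Rightarrow> bool" where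
 "C2N l u u1 u2 \<longleftrightarrow> (\<forall>x\<in>{0..l}. (u has_real_derivative u1 x) (at x within {0..l}) \<and>
      (u1 has_real_derivative u2 x) (at x within {0..l})) \<and> continuous_on {0..l} u2 \<and> u1 0 = 0 \<and> u1 l = 0"

lemma C2N_cont: assumes "C2N l u u1 u2"
  shows "continuous_on {0..l} u" "continuous_on {0..l} u1" "continuous_on {0..l} u2"
  using assms unfolding C2N_def by (auto intro: DERIV_continuous_on)

lemma neumann_C2_iff: "neumann_C2 l u \<longleftrightarrow> (\<forall>x. x \<notin> {0..l} \<longrightarrow> u x = 0) \<and> (\<exists>u1 u2. C2N l u u1 u2)"
  unfolding neumann_C2_def C2N_def by blast

lemma neumann_sol_iff: "neumann_sol l a w u \<longleftrightarrow> (\<forall>x. x \<notin> {0..l} \<longrightarrow> u x = 0) \<and>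
   (\<exists>u1 u2. C2N l u u1 u2 \<and> (\<forall>x\<in>{0..l}. a * u x - u2 x = w x))"
  unfolding neumann_sol_def C2N_def by blast

lemma neumann_C2_cont: "neumann_C2 l u \<Longrightarrow> continuous_on {0..l} u"
  using C2N_cont neumann_C2_iff by blast

lemma ibp_cos:
  assumes C: "C2N l u u1 u2" and l: "l > 0"
  shows "integral {0..l} (\<lambda>x. u2 x * cos (real k*pi*x/l)) =
         - ((real k*pi/l)^2) * integral {0..l} (\<lambda>x. u x * cos (real k*pi*x/l))"
proof -
  define m where "m = real k*pi/l"
  have mx: "\<And>x. real k*pi*x/l = m * x" unfolding m_def by simp
  define \<Phi> where "\<Phi> x = u1 x * cos (m*x) + m * u x * sin (m*x)" for x
  have cu: "continuous_on {0..l} u" "continuous_on {0..l} u1" "continuous_on {0..l} u2"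
    using C2N_cont[OF C] by auto
  have der: "\<And>x. x \<in> {0..l} \<Longrightarrow> (\<Phi> has_vector_derivative (u2 x * cos (m*x) + m^2 * (u x * cos (m*x)))) (at x within {0..l})"
  proof -
    fix x assume x: "x \<in> {0..l}"
    have d1: "(u has_real_derivative u1 x) (at x within {0..l})" "(u1 has_real_derivative u2 x) (at x within {0..l})"
      using C x unfolding C2N_def by auto
    have "(\<Phi> has_real_derivative (u2 x * cos (m*x) + m^2 * (u x * cos (m*x)))) (at x within {0..l})"
      unfolding \<Phi>_def
      by (rule derivative_eq_intros d1 | simp)+ (simp add: power2_eq_square algebra_simps)
    then show "(\<Phi> has_vector_derivative (u2 x * cos (m*x) + m^2 * (u x * cos (m*x)))) (at x within {0..l})"
      by (simp add: has_real_derivative_iff_has_vector_derivative)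
  qed
  have "((\<lambda>x. u2 x * cos (m*x) + m^2 * (u x * cos (m*x))) has_integral (\<Phi> l - \<Phi> 0)) {0..l}"
    using fundamental_theorem_of_calculus[OF _ der] l by auto
  moreover have "\<Phi> l = 0" "\<Phi> 0 = 0"
    using C l unfolding \<Phi>_def C2N_def m_def by (auto simp: sin_npi)
  ultimately have I: "integral {0..l} (\<lambda>x. u2 x * cos (m*x) + m^2 * (u x * cos (m*x))) = 0"
    by (simp add: integral_unique)
  have i1: "(\<lambda>x. u2 x * cos (m*x)) integrable_on {0..l}"
    by (intro integrable_continuous_interval continuous_intros cu)
  have i2: "(\<lambda>x. m^2 * (u x * cos (m*x))) integrable_on {0..l}"
    by (intro integrable_continuous_interval continuous_intros cu)
  have "integral {0..l} (\<lambda>x. u2 x * cos (m*x)) + m^2 * integral {0..l} (\<lambda>x. u x * cos (m*x)) = 0"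
    using I integral_add[OF i1 i2] by simp
  then show ?thesis unfolding mx m_def[symmetric] by simp
qed


lemma int0_imp0:
  fixes f :: "real \<Rightarrow> real"
  assumes "continuous_on {0..l} f" "\<And>x. x \<in> {0..l} \<Longrightarrow> 0 \<le> f x" "(f has_integral 0) {0..l}" "l > 0" "x \<in> {0..l}"
  shows "f x = 0"
  using has_integral_0_cbox_imp_0[of 0 l f x] assms by (auto simp: cbox_interval)

lemma neumann_sol_unique:
  assumes a: "a > 0" and l: "l > 0" and su: "neumann_sol l a g u" and sv: "neumann_sol l a g v"
  shows "u = v"
proof -
  obtain u1 u2 where U: "C2N l u u1 u2" "\<forall>x\<in>{0..l}. a * u x - u2 x = g x" "\<forall>x. x \<notin> {0..l} \<longrightarrow> u x = 0"
    using su unfolding neumann_sol_iff by blast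
  obtain v1 v2 where V: "C2N l v v1 v2" "\<forall>x\<in>{0..l}. a * v x - v2 x = g x" "\<forall>x. x \<notin> {0..l} \<longrightarrow> v x = 0"
    using sv unfolding neumann_sol_iff by blast
  define d where "d x = u x - v x" for x
  define d1 where "d1 x = u1 x - v1 x" for x
  define f where "f x = d1 x ^ 2 + a * d x ^ 2" for x
  have cf: "continuous_on {0..l} f"
    unfolding f_def d_def d1_def using C2N_cont[OF U(1)] C2N_cont[OF V(1)]
    by (intro continuous_intros) auto
  have der: "\<And>x. x \<in> {0..l} \<Longrightarrow> ((\<lambda>x. d x * d1 x) has_vector_derivative f x) (at x within {0..l})"
  proof -
    fix x assume x: "x \<in> {0..l}"
    have d: "(u has_real_derivative u1 x) (at x within {0..l})" "(u1 has_real_derivative u2 x) (at x within {0..l})"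
       "(v has_real_derivative v1 x) (at x within {0..l})" "(v1 has_real_derivative v2 x) (at x within {0..l})"
      using U(1) V(1) x unfolding C2N_def by auto
    have "((\<lambda>x. d x * d1 x) has_real_derivative (d1 x * d1 x + d x * (u2 x - v2 x))) (at x within {0..l})"
      unfolding d_def d1_def
      by (rule derivative_eq_intros d | simp)+
    moreover have "d1 x * d1 x + d x * (u2 x - v2 x) = f x"
    proof -
      have "u2 x = a * u x - g x" "v2 x = a * v x - g x" using U(2) V(2) x by force+
      then have e: "u2 x - v2 x = a * d x" unfolding d_def by (simp add: algebra_simps)
      show ?thesis unfolding f_def e by (simp add: power2_eq_square)
    qed
    ultimately show "((\<lambda>x. d x * d1 x) has_vector_derivative f x) (at x within {0..l})"
      by (simp add: has_real_derivative_iff_has_vector_derivative)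
  qed
  have "(f has_integral (d l * d1 l - d 0 * d1 0)) {0..l}"
    using fundamental_theorem_of_calculus[OF _ der] l by auto
  moreover have "d1 l = 0" "d1 0 = 0" using U(1) V(1) unfolding C2N_def d1_def by auto
  ultimately have fi: "(f has_integral 0) {0..l}" by simp
  have "\<And>x. x \<in> {0..l} \<Longrightarrow> f x = 0"
    by (rule int0_imp0[OF cf _ fi l]) (use a in \<open>auto simp: f_def\<close>)
  have "d x = 0" if x: "x \<in> {0..l}" for x
  proof -
    have "d1 x ^ 2 + a * d x ^ 2 = 0" using \<open>\<And>x. x \<in> {0..l} \<Longrightarrow> f x = 0\<close>[OF x] by (simp add: f_def)
    moreover have "0 \<le> d1 x ^ 2" "0 \<le> a * d x ^ 2" using a by auto
    ultimately have "a * d x ^ 2 = 0" by linarith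
    then show ?thesis using a by simp
  qed
  then show ?thesis using U(3) V(3) unfolding d_def by (intro ext) (metis eq_iff_diff_eq_0)
qed

lemma dcosh: "((\<lambda>x. cosh (k*x)) has_real_derivative sinh (k*x) * k) (at x within s)"
  using has_field_derivative_cosh[of "\<lambda>x. k*x" k x s] by (simp add: DERIV_cmult_right)
lemma dsinh: "((\<lambda>x. sinh (k*x)) has_real_derivative cosh (k*x) * k) (at x within s)"
  using has_field_derivative_sinh[of "\<lambda>x. k*x" k x s] by (simp add: DERIV_cmult_right)

lemma neumann_sol_exists:
  assumes a: "a > 0" and l: "l > 0" and g: "continuous_on {0..l} g"
  shows "\<exists>u. neumann_sol l a g u"
proof -
  define k where "k = sqrt a"
  have k: "k > 0" "k^2 = a" using a unfolding k_def by auto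
  define C where "C x = integral {0..x} (\<lambda>t. cosh (k*t) * g t)" for x
  define S where "S x = integral {0..x} (\<lambda>t. sinh (k*t) * g t)" for x
  have sp: "sinh (k*l) > 0" using k l by (simp add: sinh_real_pos_iff)
  define A where "A = (cosh (k*l) * C l - sinh (k*l) * S l) / (k * sinh (k*l))"
  define U where "U x = A * cosh (k*x) + 1/k * (cosh (k*x) * S x - sinh (k*x) * C x)" for x
  define U1 where "U1 x = A * k * sinh (k*x) + sinh (k*x) * S x - cosh (k*x) * C x" for x
  define u where "u x = (if x \<in> {0..l} then U x else 0)" for x
  have dC: "(C has_real_derivative cosh (k*x) * g x) (at x within {0..l})" if "x \<in> {0..l}" for x
    unfolding C_def has_real_derivative_iff_has_vector_derivative
    by (rule integral_has_vector_derivative[OF _ that]) (intro continuous_intros g)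
  have dS: "(S has_real_derivative sinh (k*x) * g x) (at x within {0..l})" if "x \<in> {0..l}" for x
    unfolding S_def has_real_derivative_iff_has_vector_derivative
    by (rule integral_has_vector_derivative[OF _ that]) (intro continuous_intros g)
  have dU: "(U has_real_derivative U1 x) (at x within {0..l})" if "x \<in> {0..l}" for x
    unfolding U_def U1_def
    using k(1) by (auto intro!: derivative_eq_intros dC[OF that] dS[OF that] dcosh dsinh simp: field_simps)
  have dU1: "(U1 has_real_derivative (a * U x - g x)) (at x within {0..l})" if "x \<in> {0..l}" for x
  proof -
    have h: "cosh (k*x) * cosh (k*x) = sinh (k*x) * sinh (k*x) + 1"
      using cosh_square_eq[of "k*x"] by (simp add: power2_eq_square)
    show ?thesis
    unfolding U1_def U_def k(2)[symmetric]
    using k(1) by (auto intro!: derivative_eq_intros dC[OF that] dS[OF that] dcosh dsinh simp: field_simps power2_eq_square h)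
  qed
  have cU: "continuous_on {0..l} U" using dU by (rule DERIV_continuous_on)
  have C2: "C2N l u U1 (\<lambda>x. a * U x - g x)"
    unfolding C2N_def
  proof (intro conjI ballI)
    fix x assume x: "x \<in> {0..l}"
    show "(u has_real_derivative U1 x) (at x within {0..l})"
      by (rule has_field_derivative_transform_within[OF dU[OF x] zero_less_one x]) (simp add: u_def)
    show "(U1 has_real_derivative a * U x - g x) (at x within {0..l})" by (rule dU1[OF x])
  next
    show "continuous_on {0..l} (\<lambda>x. a * U x - g x)" by (intro continuous_intros cU g)
    show "U1 0 = 0" unfolding U1_def C_def S_def by simp
    have "sinh (k*l) \<noteq> 0" "k \<noteq> 0" using sp k by auto
    then show "U1 l = 0" unfolding U1_def A_def by (simp add: field_simps del: sinh_real_pos_iff)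
  qed
  have "neumann_sol l a g u"
    unfolding neumann_sol_iff
  proof (intro conjI exI)
    show "\<forall>x. x \<notin> {0..l} \<longrightarrow> u x = 0" by (simp add: u_def)
    show "C2N l u U1 (\<lambda>x. a * U x - g x)" by (rule C2)
    show "\<forall>x\<in>{0..l}. a * u x - (a * U x - g x) = g x" by (simp add: u_def)
  qed
  then show ?thesis by blast
qed

lemma cont_poly_comp: "continuous_on S f \<Longrightarrow> continuous_on S (\<lambda>x. poly p (f x :: real))"
  unfolding poly_altdef by (intro continuous_intros)

lemma cos_int_nat: "cos (real_of_int m * t) = cos (real (nat \<bar>m\<bar>) * t)"
proof (cases "m \<ge> 0")
  case True then show ?thesis by simp
next
  case False
  then have "real_of_int m * t = - (real (nat \<bar>m\<bar>) * t)" by simp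
  then show ?thesis by (simp only: cos_minus)
qed

lemma cos_complete:
  fixes h :: "real \<Rightarrow> real"
  assumes l: "l > 0" and h: "continuous_on {0..l} h"
  and z: "\<forall>k::nat. integral {0..l} (\<lambda>x. h x * cos (real k * pi * x / l)) = 0"
  and x: "x \<in> {0..l}"
  shows "h x = 0"
proof -
  define c where "c x = pi * x / l" for x
  have cc: "continuous_on {0..l} c" unfolding c_def using l by (intro continuous_intros) auto
  have z': "integral {0..l} (\<lambda>x. h x * cos (real k * c x)) = 0" for k
    using z unfolding c_def by (simp add: mult.assoc times_divide_eq_right)
  have step1: "integral {0..l} (\<lambda>x. h x * (cos (c x) ^ n * cos (real_of_int m * c x))) = 0" for n m
  proof (induction n arbitrary: m)
    case 0
    then show ?case using z'[of "nat \<bar>m\<bar>"] by (simp add: cos_int_nat)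
  next
    case (Suc n)
    have e: "h x * (cos (c x) ^ Suc n * cos (real_of_int m * c x)) =
      (h x * (cos (c x) ^ n * cos (real_of_int (m - 1) * c x)) + h x * (cos (c x) ^ n * cos (real_of_int (m + 1) * c x))) / 2" for x
    proof -
      have "cos (c x) * cos (real_of_int m * c x) = (cos (real_of_int (m - 1) * c x) + cos (real_of_int (m + 1) * c x)) / 2"
        using cos_times_cos[of "real_of_int m * c x" "c x"] by (simp add: algebra_simps mult.commute)
      note F = this
      have "h x * (cos (c x) ^ Suc n * cos (real_of_int m * c x)) = (h x * cos (c x) ^ n) * (cos (c x) * cos (real_of_int m * c x))"
        by (simp only: power_Suc ac_simps)
      also have "\<dots> = (h x * cos (c x) ^ n) * ((cos (real_of_int (m - 1) * c x) + cos (real_of_int (m + 1) * c x)) / 2)"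
        by (simp only: F)
      finally show ?thesis by (simp add: algebra_simps add_divide_distrib)

    qed
    have i1: "(\<lambda>x. h x * (cos (c x) ^ n * cos (real_of_int (m - 1) * c x))) integrable_on {0..l}"
      by (intro integrable_continuous_interval continuous_intros h cc)
    have i2: "(\<lambda>x. h x * (cos (c x) ^ n * cos (real_of_int (m + 1) * c x))) integrable_on {0..l}"
      by (intro integrable_continuous_interval continuous_intros h cc)
    show ?case unfolding e
      using integral_add[OF i1 i2] Suc.IH[of "m-1"] Suc.IH[of "m+1"] by simp
  qed
  have step2: "integral {0..l} (\<lambda>x. h x * poly p (cos (c x))) = 0" for p
  proof -
    have "integral {0..l} (\<lambda>x. h x * poly p (cos (c x))) =
          integral {0..l} (\<lambda>x. \<Sum>i\<le>degree p. coeff p i * (h x * cos (c x) ^ i))"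
      unfolding poly_altdef by (simp add: sum_distrib_left algebra_simps)
    also have "\<dots> = (\<Sum>i\<le>degree p. integral {0..l} (\<lambda>x. coeff p i * (h x * cos (c x) ^ i)))"
      by (rule integral_sum) (auto intro!: integrable_continuous_interval continuous_intros h cc)
    also have "\<dots> = 0"
      using step1[of _ 0] by simp
    finally show ?thesis .
  qed
  define R where "R = {f. \<exists>p. f = (\<lambda>x. poly p (cos (c x)))}"
  interpret PR: function_ring_on R "{0..l}"
  proof unfold_locales
    show "compact {0..l::real}" by simp
  next
    fix f assume "f \<in> R" then show "continuous_on {0..l} f"
      unfolding R_def by (auto intro!: cont_poly_comp continuous_intros cc)
  next
    fix f g assume "f \<in> R" "g \<in> R"
    then obtain p q where "f = (\<lambda>x. poly p (cos (c x)))" "g = (\<lambda>x. poly q (cos (c x)))" unfolding R_def by blast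
    then show "(\<lambda>x. f x + g x) \<in> R" "(\<lambda>x. f x * g x) \<in> R" unfolding R_def
      by (auto intro: exI[of _ "p+q"] exI[of _ "p*q"])
  next
    fix a :: real show "(\<lambda>_. a) \<in> R" unfolding R_def by (auto intro!: exI[of _ "[:a:]"])
  next
    fix x y :: real assume xy: "x \<in> {0..l}" "y \<in> {0..l}" "x \<noteq> y"
    have "cos (c x) \<noteq> cos (c y)"
    proof
      assume "cos (c x) = cos (c y)"
      moreover have "0 \<le> c x" "c x \<le> pi" "0 \<le> c y" "c y \<le> pi" using xy l unfolding c_def
        by (auto simp: field_simps)
      ultimately have "c x = c y" using cos_inj_pi by blast
      then show False using xy l unfolding c_def by auto
    qed
    then show "\<exists>f\<in>R. f x \<noteq> f y" unfolding R_def by (auto intro!: exI[of _ "[:0,1:]"])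
  qed
  obtain B where B: "0 \<le> B" "\<And>x. x \<in> {0..l} \<Longrightarrow> norm (h x) \<le> B"
    using continuous_on_compact_bound[OF compact_Icc h] by blast
  have ih2: "(\<lambda>x. h x * h x) integrable_on {0..l}"
    by (intro integrable_continuous_interval continuous_intros h)
  have bnd: "\<bar>integral {0..l} (\<lambda>x. h x * h x)\<bar> \<le> 0 + e" if e: "e > 0" for e
  proof -
    define e' where "e' = e / (l * (B + 1))"
    have e': "e' > 0" using e l B unfolding e'_def by auto
    obtain g where g: "g \<in> R" "\<forall>x\<in>{0..l}. \<bar>h x - g x\<bar> < e'"
      using PR.Stone_Weierstrass_basic[OF h e'] by blast
    obtain p where p: "g = (\<lambda>x. poly p (cos (c x)))" using g(1) unfolding R_def by blast
    have ihg: "(\<lambda>x. h x * g x) integrable_on {0..l}"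
      unfolding p by (intro integrable_continuous_interval continuous_intros h cont_poly_comp cc)
    have "integral {0..l} (\<lambda>x. h x * g x) = 0" unfolding p by (rule step2)
    then have "integral {0..l} (\<lambda>x. h x * h x) = integral {0..l} (\<lambda>x. h x * h x - h x * g x)"
      using integral_diff[OF ih2 ihg] by simp
    also have "\<dots> = integral {0..l} (\<lambda>x. h x * (h x - g x))" by (simp add: algebra_simps)
    finally have eq: "integral {0..l} (\<lambda>x. h x * h x) = integral {0..l} (\<lambda>x. h x * (h x - g x))" .
    have "norm (integral {0..l} (\<lambda>x. h x * (h x - g x))) \<le> integral {0..l} (\<lambda>x. (B + 1) * e')"
    proof (rule integral_norm_bound_integral)
      show "(\<lambda>x. h x * (h x - g x)) integrable_on {0..l}"
        unfolding p by (intro integrable_continuous_interval continuous_intros h cont_poly_comp cc)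
      show "(\<lambda>x. (B + 1) * e') integrable_on {0..l}" by (rule integrable_const_ivl)
      fix x assume x: "x \<in> {0..l}"
      have "\<bar>h x\<bar> \<le> B + 1" using B(2)[OF x] by simp
      moreover have "\<bar>h x - g x\<bar> \<le> e'" using g(2) x by (meson less_imp_le)
      ultimately show "norm (h x * (h x - g x)) \<le> (B + 1) * e'"
        by (simp add: abs_mult mult_mono')
    qed
    also have "\<dots> = l * ((B + 1) * e')" using l by simp
    also have "\<dots> = e"
    proof -
      have ne: "l * (B + 1) \<noteq> 0" using l B(1) by simp
      have "l * ((B + 1) * e') = (l * (B + 1)) * e'" by (simp only: mult.assoc)
      also have "\<dots> = e" unfolding e'_def using ne by simp
      finally show ?thesis .
    qed
    finally show ?thesis using eq by simp
  qed
  have "\<bar>integral {0..l} (\<lambda>x. h x * h x)\<bar> \<le> 0" by (rule field_le_epsilon) (rule bnd)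
  then have "((\<lambda>x. h x * h x) has_integral 0) {0..l}"
    using integrable_integral[OF ih2] by simp
  then have "h x * h x = 0"
    by (intro int0_imp0[OF _ _ _ l x]) (auto intro!: continuous_intros h)
  then show ?thesis by simp
qed

definition ck :: "real \<Rightarrow> (real \<Rightarrow> real) \<Rightarrow> nat \<Rightarrow> real" where
  "ck l h k = integral {0..l} (\<lambda>x. h x * cos (real k * pi * x / l))"

definition cf :: "real \<Rightarrow> nat \<Rightarrow> real \<Rightarrow> real" where
  "cf l j x = (if x \<in> {0..l} then cos (real j * pi * x / l) else 0)"

lemma cos_cont: "continuous_on S (\<lambda>x. cos (real k * pi * x / l))"
proof -
  have "continuous_on S (\<lambda>x. cos ((real k * pi / l) * x))" by (intro continuous_intros)
  then show ?thesis by simp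
qed

lemma ck_lin:
  assumes "continuous_on {0..l} u" "continuous_on {0..l} v"
  shows "ck l (\<lambda>x. a * u x + b * v x) k = a * ck l u k + b * ck l v k"
proof -
  have i1: "(\<lambda>x. a * (u x * cos (real k * pi * x / l))) integrable_on {0..l}"
    by (intro integrable_continuous_interval continuous_intros assms cos_cont)
  have i2: "(\<lambda>x. b * (v x * cos (real k * pi * x / l))) integrable_on {0..l}"
    by (intro integrable_continuous_interval continuous_intros assms cos_cont)
  show ?thesis unfolding ck_def using integral_add[OF i1 i2]
    by (simp add: algebra_simps)
qed

lemma ck_cong: "(\<And>x. x \<in> {0..l} \<Longrightarrow> u x = v x) \<Longrightarrow> ck l u k = ck l v k"
  unfolding ck_def by (rule integral_cong) simp

lemma lam_eq: "lam l k = (real k * pi / l)^2"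
  unfolding lam_def by (simp add: mult.commute)

lemma ck_sol:
  assumes "neumann_sol l a g u" "l > 0"
  shows "(a + lam l k) * ck l u k = ck l g k"
proof -
  obtain u1 u2 where U: "C2N l u u1 u2" "\<forall>x\<in>{0..l}. a * u x - u2 x = g x"
    using assms(1) unfolding neumann_sol_iff by blast
  have cu: "continuous_on {0..l} u" "continuous_on {0..l} u2" using C2N_cont[OF U(1)] by auto
  have "ck l g k = ck l (\<lambda>x. a * u x + (-1) * u2 x) k"
    by (rule ck_cong) (use U(2) in auto)
  also have "\<dots> = a * ck l u k - ck l u2 k" using ck_lin[OF cu, of a "-1" k] by simp
  also have "ck l u2 k = - lam l k * ck l u k"
    using ibp_cos[OF U(1) assms(2), of k] unfolding ck_def lam_eq by simp
  finally show ?thesis by (simp add: algebra_simps)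
qed

lemma sol_C2: "neumann_sol l a g u \<Longrightarrow> neumann_C2 l u"
  unfolding neumann_sol_def neumann_C2_def by blast

lemma inv_sol:
  assumes "a > 0" "l > 0" "continuous_on {0..l} g"
  shows "neumann_sol l a g (neumann_inv l a g)"
proof -
  have "\<exists>!u. neumann_sol l a g u"
    using neumann_sol_exists[OF assms] neumann_sol_unique[OF assms(1,2)] by blast
  then show ?thesis unfolding neumann_inv_def by (rule theI')
qed

lemma inv_eq:
  assumes "a > 0" "l > 0" "neumann_sol l a g u"
  shows "neumann_inv l a g = u"
  unfolding neumann_inv_def
  using assms neumann_sol_unique[OF assms(1,2)] by (intro the_equality) auto

lemma C2_lin:
  assumes "neumann_C2 l u" "neumann_C2 l v"
  shows "neumann_C2 l (\<lambda>x. a * u x + b * v x)"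
proof -
  obtain u1 u2 v1 v2 where U: "C2N l u u1 u2" "\<forall>x. x \<notin> {0..l} \<longrightarrow> u x = 0"
    and V: "C2N l v v1 v2" "\<forall>x. x \<notin> {0..l} \<longrightarrow> v x = 0"
    using assms unfolding neumann_C2_iff by blast
  have "C2N l (\<lambda>x. a * u x + b * v x) (\<lambda>x. a * u1 x + b * v1 x) (\<lambda>x. a * u2 x + b * v2 x)"
    using U(1) V(1) unfolding C2N_def
    by (auto intro!: derivative_eq_intros continuous_intros)
  then show ?thesis unfolding neumann_C2_iff using U(2) V(2) by auto
qed

lemma C2_scale: "neumann_C2 l u \<Longrightarrow> neumann_C2 l (\<lambda>x. a * u x)"
  using C2_lin[of l u u a 0] by simp

lemma C2_diff: "neumann_C2 l u \<Longrightarrow> neumann_C2 l v \<Longrightarrow> neumann_C2 l (\<lambda>x. u x - v x)"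
  using C2_lin[of l u v 1 "-1"] by simp

lemma cf_sol:
  assumes l: "l > 0" and a: "a + lam l j \<noteq> 0"
  shows "neumann_sol l a (\<lambda>x. c * cf l j x) (\<lambda>x. c / (a + lam l j) * cf l j x)"
proof -
  define m where "m = real j * pi / l"
  have mx: "\<And>x. real j * pi * x / l = m * x" unfolding m_def by simp
  define d where "d = c / (a + lam l j)"
  have lm: "lam l j = m^2" unfolding lam_eq m_def ..
  have C: "C2N l (\<lambda>x. d * cf l j x) (\<lambda>x. - d * m * sin (m * x)) (\<lambda>x. - d * m^2 * cos (m * x))"
    unfolding C2N_def
  proof (intro conjI ballI)
    fix x assume x: "x \<in> {0..l}"
    have "((\<lambda>x. d * cos (m * x)) has_real_derivative - d * m * sin (m * x)) (at x within {0..l})"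
      by (auto intro!: derivative_eq_intros)
    then show "((\<lambda>x. d * cf l j x) has_real_derivative - d * m * sin (m * x)) (at x within {0..l})"
      by (rule has_field_derivative_transform_within[OF _ zero_less_one x]) (simp add: cf_def mx)
    show "((\<lambda>x. - d * m * sin (m * x)) has_real_derivative - d * m^2 * cos (m * x)) (at x within {0..l})"
      by (auto intro!: derivative_eq_intros simp: power2_eq_square)
  next
    show "continuous_on {0..l} (\<lambda>x. - d * m^2 * cos (m * x))" by (intro continuous_intros)
    show "- d * m * sin (m * 0) = 0" by simp
    show "- d * m * sin (m * l) = 0" using l unfolding m_def by (simp add: sin_npi)
  qed
  have cfm: "\<And>x. x \<in> {0..l} \<Longrightarrow> cf l j x = cos (m*x)" by (simp add: cf_def mx)
  show ?thesis unfolding neumann_sol_iff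
  proof (intro conjI exI)
    show "\<forall>x. x \<notin> {0..l} \<longrightarrow> c / (a + lam l j) * cf l j x = 0" by (simp add: cf_def)
    show "C2N l (\<lambda>x. c / (a + lam l j) * cf l j x) (\<lambda>x. - d * m * sin (m * x)) (\<lambda>x. - d * m^2 * cos (m * x))"
      using C unfolding d_def .
    show "\<forall>x\<in>{0..l}. a * (c / (a + lam l j) * cf l j x) - - d * m^2 * cos (m * x) = c * cf l j x"
    proof
      fix x assume x: "x \<in> {0..l}"
      have "a * (c / (a + lam l j) * cf l j x) - - d * m^2 * cos (m * x) = d * (a + lam l j) * cos (m * x)"
        unfolding d_def lm by (simp add: cfm[OF x] algebra_simps add_divide_distrib)
      also have "d * (a + lam l j) = c" unfolding d_def using a by simp
      finally show "a * (c / (a + lam l j) * cf l j x) - - d * m^2 * cos (m * x) = c * cf l j x"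
        by (simp add: cfm[OF x])
    qed
  qed
qed

lemma cf_C2: "l > 0 \<Longrightarrow> neumann_C2 l (\<lambda>x. c * cf l j x)"
proof -
  assume l: "l > 0"
  have p: "1 + lam l j > 0" unfolding lam_def by (simp add: add_pos_nonneg)
  have "neumann_C2 l (\<lambda>x. (c * (1 + lam l j)) / (1 + lam l j) * cf l j x)"
    using sol_C2[OF cf_sol[OF l, of 1 j "c * (1 + lam l j)"]] p by simp
  then show ?thesis using p by simp
qed

lemma cf_cont: "l > 0 \<Longrightarrow> continuous_on {0..l} (cf l j)"
  using neumann_C2_cont[OF cf_C2[of l 1 j]] by simp

lemma ck_cf:
  assumes l: "l > 0" and j: "j \<ge> 1"
  shows "ck l (cf l j) k = (if k = j then l / 2 else 0)"
proof (cases "k = j")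
  case True
  define m where "m = real j * pi / l"
  have m: "m > 0" using l j unfolding m_def by auto
  have mx: "\<And>x. real j * pi * x / l = m * x" unfolding m_def by simp
  have "ck l (cf l j) j = integral {0..l} (\<lambda>x. cos (m * x) * cos (m * x))"
    unfolding ck_def by (rule integral_cong) (simp add: cf_def mx)
  also have "\<dots> = l / 2"
  proof -
    define \<Phi> where "\<Phi> x = x / 2 + sin (2 * m * x) / (4 * m)" for x
    have "((\<lambda>x. cos (m * x) * cos (m * x)) has_integral (\<Phi> l - \<Phi> 0)) {0..l}"
    proof (rule fundamental_theorem_of_calculus)
      show "0 \<le> l" using l by simp
      fix x assume "x \<in> {0..l}"
      have "(\<Phi> has_real_derivative 1/2 + cos (2 * m * x) * (2 * m) / (4 * m)) (at x within {0..l})"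
        unfolding \<Phi>_def by (auto intro!: derivative_eq_intros)
      moreover have "1/2 + cos (2 * m * x) * (2 * m) / (4 * m) = cos (m * x) * cos (m * x)"
      proof -
        have "cos (2*m*x) = 2 * cos (m*x)^2 - 1" using cos_double_cos[of "m*x"] by (simp add: mult.assoc)
        then show ?thesis using m by (simp add: power2_eq_square field_simps)
      qed
      ultimately show "(\<Phi> has_vector_derivative cos (m * x) * cos (m * x)) (at x within {0..l})"
        by (simp add: has_real_derivative_iff_has_vector_derivative)
    qed
    moreover have "\<Phi> l - \<Phi> 0 = l / 2"
    proof -
      have "2 * m * l = real (2 * j) * pi" using l unfolding m_def by simp
      then have "sin (2 * m * l) = 0" by (simp only: sin_npi)
      then show ?thesis unfolding \<Phi>_def by simp
    qed
    ultimately show ?thesis by (simp add: integral_unique)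
  qed
  finally show ?thesis using True by simp
next
  case False
  define m where "m = real j * pi / l"
  have mx: "\<And>x. real j * pi * x / l = m * x" unfolding m_def by simp
  have C: "C2N l (cf l j) (\<lambda>x. - m * sin (m * x)) (\<lambda>x. - (m^2) * cos (m * x))"
    unfolding C2N_def
  proof (intro conjI ballI)
    fix x assume x: "x \<in> {0..l}"
    have "((\<lambda>x. cos (m * x)) has_real_derivative - m * sin (m * x)) (at x within {0..l})"
      by (auto intro!: derivative_eq_intros)
    then show "(cf l j has_real_derivative - m * sin (m * x)) (at x within {0..l})"
      by (rule has_field_derivative_transform_within[OF _ zero_less_one x]) (simp add: cf_def mx)
    show "((\<lambda>x. - m * sin (m * x)) has_real_derivative - (m^2) * cos (m * x)) (at x within {0..l})"
      by (auto intro!: derivative_eq_intros simp: power2_eq_square)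
  next
    show "continuous_on {0..l} (\<lambda>x. - (m^2) * cos (m * x))" by (intro continuous_intros)
    show "- m * sin (m * 0) = 0" by simp
    show "- m * sin (m * l) = 0" using l unfolding m_def by (simp add: sin_npi)
  qed
  have "integral {0..l} (\<lambda>x. - (m^2) * cos (m * x) * cos (real k * pi * x / l)) = - lam l j * ck l (cf l j) k"
  proof -
    have "integral {0..l} (\<lambda>x. - (m^2) * cos (m * x) * cos (real k * pi * x / l)) =
          integral {0..l} (\<lambda>x. - (m^2) * (cf l j x * cos (real k * pi * x / l)))"
      by (rule integral_cong) (simp add: cf_def mx)
    then show ?thesis unfolding ck_def lam_eq m_def by simp
  qed
  moreover have "integral {0..l} (\<lambda>x. - (m^2) * cos (m * x) * cos (real k * pi * x / l)) = - lam l k * ck l (cf l j) k"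
    using ibp_cos[OF C l, of k] unfolding ck_def lam_eq by simp
  ultimately have "(lam l j - lam l k) * ck l (cf l j) k = 0" by (simp add: algebra_simps)
  moreover have "lam l j \<noteq> lam l k"
  proof
    assume "lam l j = lam l k"
    then have "(pi * real j / l)^2 = (pi * real k / l)^2" unfolding lam_def .
    then have "pi * real j / l = pi * real k / l" using l by (simp add: power2_eq_iff_nonneg)
    then show False using False l by simp
  qed
  ultimately show ?thesis using False by simp
qed

lemma ck_scale: "continuous_on {0..l} u \<Longrightarrow> ck l (\<lambda>x. a * u x) k = a * ck l u k"
  using ck_lin[of l u u a 0 k] by simp

lemma ck_diff: "continuous_on {0..l} u \<Longrightarrow> continuous_on {0..l} v \<Longrightarrow> ck l (\<lambda>x. u x - v x) k = ck l u k - ck l v k"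
  using ck_lin[of l u v 1 "-1" k] by simp

lemma key_alg:
  fixes R D L s p K :: real
  assumes "R > 0" "D > 0" "K \<noteq> 0" "K = 1 + D * L"
  shows "L - (- p / (D * R) - s / R) - (p / (D * R)) / K = (s - (- (p / K + R) * L)) / R"
proof -
  have "L - (- p / (D * R) - s / R) - (p / (D * R)) / K - (s - (- (p / K + R) * L)) / R
      = p * (K - 1 - D * L) / (D * R * K)"
    using assms(1-3) by (simp add: field_simps)
  also have "\<dots> = 0" using assms(4) by simp
  finally show ?thesis by simp
qed

theorem lemma2p2:
  fixes l D :: real and r r' r'' :: "real \<Rightarrow> real" and j :: nat
  assumes l_pos: "l > 0" and D_pos: "D > 0"
    and r_C2: "\<forall>v\<in>{0..}. (r has_real_derivative r' v) (at v within {0..}) \<and>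
                          (r' has_real_derivative r'' v) (at v within {0..})"
    and r''_cont: "continuous_on {0..} r''"
    and r_pos: "\<forall>v\<in>{0..}. r v > 0"
    and r'_neg: "\<forall>v\<in>{0..}. r' v < 0"
    and r_lim: "(r \<longlongrightarrow> 0) at_top"
    and ic: "\<exists>ic::nat. ic \<ge> 1 \<and> (\<forall>i. 1 \<le> i \<and> i \<le> ic \<longrightarrow> sig r r' D l i > 0)
                               \<and> (\<forall>i. i > ic \<longrightarrow> sig r r' D l i \<le> 0)"
    and j_pos: "j \<ge> 1"
    and j_lam: "lam l j < - (r' 1 + r 1) / (D * r 1)"
    and j_simple: "\<forall>k::nat. k \<noteq> j \<longrightarrow> sig r r' D l j \<noteq> sig r r' D l k"
    and j_range: "0 < sig r r' D l j \<and> sig r r' D l j < sig_c r r' D"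
  shows "eigenvalue_alg_mult_one (Xspace l) (Mop r r' D l (sig r r' D l j)) 1"
proof -
  define \<sigma> where "\<sigma> = sig r r' D l j"
  define lj where "lj = lam l j"
  define f0v where "f0v = f0 r r' D \<sigma>"
  define f1v where "f1v = f1 r r' D"
  define E where "E = 1 + D * lj"
  have r1: "r 1 > 0" "r' 1 < 0" using r_pos r'_neg by auto
  have lj: "lj > 0" using l_pos j_pos unfolding lj_def lam_def by simp
  have lk: "lam l k \<ge> 0" for k unfolding lam_def by simp
  have Ek: "1 + D * lam l k > 0" for k using D_pos lk[of k] by (simp add: add_pos_nonneg)
  have E: "E > 0" unfolding E_def lj_def using Ek .
  have sig_pos: "\<sigma> > 0" and sig_lt: "\<sigma> < sig_c r r' D" using j_range unfolding \<sigma>_def by auto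
  have rr: "- r' 1 > r 1"
  proof -
    have "\<sigma> = - (r' 1 / E + r 1) * lj" unfolding \<sigma>_def sig_def E_def lj_def ..
    then have "- (r' 1 / E + r 1) > 0" using sig_pos lj by (simp add: zero_less_mult_iff)
    then have "- r' 1 / E > r 1" by simp
    then have "- r' 1 > r 1 * E" using E by (simp add: field_simps)
    moreover have "r 1 * E \<ge> r 1" using r1 lj D_pos unfolding E_def by (simp add: algebra_simps)
    ultimately show ?thesis by simp
  qed
  have f0pos: "f0v > 0"
  proof -
    have "sqrt (r 1) \<le> sqrt (- r' 1)" using rr by simp
    then have s1: "0 \<le> sqrt (- r' 1) - sqrt (r 1)" and s2: "sqrt (- r' 1) - sqrt (r 1) \<le> sqrt (- r' 1)"
      using r1 by auto
    have "(sqrt (- r' 1) - sqrt (r 1))^2 \<le> (sqrt (- r' 1))^2" by (rule power_mono[OF s2 s1])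
    then have "(sqrt (- r' 1) - sqrt (r 1))^2 \<le> - r' 1" using r1 by simp
    then have "(sqrt (- r' 1) - sqrt (r 1))^2 / D \<le> (- r' 1) / D" using D_pos by (rule divide_right_mono[OF _ less_imp_le])
    then have "sig_c r r' D \<le> - r' 1 / D" unfolding sig_c_def by simp
    then have "\<sigma> < - r' 1 / D" using sig_lt by simp
    then have "0 < - r' 1 / D - \<sigma>" by simp
    then have "0 < (- r' 1 / D - \<sigma>) / r 1" using r1 by simp
    also have "(- r' 1 / D - \<sigma>) / r 1 = f0v" unfolding f0v_def f0_def using D_pos r1 by (simp add: field_simps)
    finally show ?thesis .
  qed
  have key: "lam l k - f0v - f1v / (1 + D * lam l k) = (\<sigma> - sig r r' D l k) / r 1" for k
  proof -
    have "1 + D * lam l k \<noteq> 0" using Ek[of k] by simp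
    then show ?thesis unfolding f0v_def f1v_def f0_def f1_def sig_def
      using key_alg[OF r1(1) D_pos _ refl] by simp
  qed
  have keyj: "f1v / E = lj - f0v"
    using key[of j] unfolding \<sigma>_def E_def lj_def by simp
  define Fs where "Fs = neumann_inv l f0v"
  define FF where "FF = neumann_inv l (1 / D)"
  define M where "M = Mop r r' D l \<sigma>"
  have M_eq: "M w = (\<lambda>x. 2 * f0v * Fs (fst w) x + f1v * Fs (snd w) x, \<lambda>x. (1 / D) * FF (fst w) x)" for w
    unfolding M_def Mop_def f0v_def f1v_def Fs_def FF_def g0_def g1_def by (simp add: Let_def)
  define N where "N z = psub (pscale 1 z) (M z)" for z
  have N_eq: "N z = (\<lambda>x. fst z x - fst (M z) x, \<lambda>x. snd z x - snd (M z) x)" for z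
    by (simp add: N_def psub_def pscale_def)
  define \<phi> where "\<phi> = (cf l j, \<lambda>x. (1 / E) * cf l j x)"
  have Dp: "1 / D > 0" using D_pos by simp
  have solFs: "neumann_sol l f0v g (Fs g)" if "neumann_C2 l g" for g
    unfolding Fs_def by (rule inv_sol[OF f0pos l_pos neumann_C2_cont[OF that]])
  have solFF: "neumann_sol l (1 / D) g (FF g)" if "neumann_C2 l g" for g
    unfolding FF_def by (rule inv_sol[OF Dp l_pos neumann_C2_cont[OF that]])
  have Xd: "w \<in> Xspace l \<longleftrightarrow> neumann_C2 l (fst w) \<and> neumann_C2 l (snd w)" for w
    by (simp add: Xspace_def)
  have MX: "M w \<in> Xspace l" if "w \<in> Xspace l" for w
  proof -
    have w: "neumann_C2 l (fst w)" "neumann_C2 l (snd w)" using that unfolding Xd by auto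
    have "neumann_C2 l (\<lambda>x. 2 * f0v * Fs (fst w) x + f1v * Fs (snd w) x)"
      by (intro C2_lin sol_C2[OF solFs] w)
    moreover have "neumann_C2 l (\<lambda>x. (1 / D) * FF (fst w) x)"
      by (intro C2_scale sol_C2[OF solFF] w)
    ultimately show ?thesis unfolding Xd M_eq fst_conv snd_conv by blast
  qed
  have M_ck1: "ck l (fst (M w)) k * (f0v + lam l k) = 2 * f0v * ck l (fst w) k + f1v * ck l (snd w) k"
    if w: "w \<in> Xspace l" for w k
  proof -
    have sp: "neumann_sol l f0v (fst w) (Fs (fst w))" "neumann_sol l f0v (snd w) (Fs (snd w))"
      using w solFs unfolding Xd by auto
    have c: "continuous_on {0..l} (Fs (fst w))" "continuous_on {0..l} (Fs (snd w))"
      using sp by (auto intro: neumann_C2_cont sol_C2)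
    have "ck l (fst (M w)) k = 2 * f0v * ck l (Fs (fst w)) k + f1v * ck l (Fs (snd w)) k"
      unfolding M_eq using ck_lin[OF c] by simp
    then show ?thesis
      using ck_sol[OF sp(1) l_pos, of k] ck_sol[OF sp(2) l_pos, of k] by (simp add: algebra_simps)
  qed
  have M_ck2: "ck l (snd (M w)) k * (1 + D * lam l k) = ck l (fst w) k"
    if w: "w \<in> Xspace l" for w k
  proof -
    have sp: "neumann_sol l (1 / D) (fst w) (FF (fst w))"
      using w solFF unfolding Xd by auto
    have c: "continuous_on {0..l} (FF (fst w))"
      using sp by (auto intro: neumann_C2_cont sol_C2)
    have "ck l (snd (M w)) k = (1 / D) * ck l (FF (fst w)) k"
      unfolding M_eq snd_conv by (rule ck_scale[OF c])
    moreover have "(1 / D) * ck l (FF (fst w)) k * (1 + D * lam l k) = (1 / D + lam l k) * ck l (FF (fst w)) k"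
      using D_pos by (simp add: field_simps)
    ultimately show ?thesis
      using ck_sol[OF sp l_pos, of k] by simp
  qed
  have NX: "N w \<in> Xspace l" if "w \<in> Xspace l" for w
    using that MX[OF that] unfolding Xd N_eq by (auto intro!: C2_diff)
  have N_ck: "ck l (fst (N w)) k = ck l (fst w) k - ck l (fst (M w)) k"
             "ck l (snd (N w)) k = ck l (snd w) k - ck l (snd (M w)) k"
    if w: "w \<in> Xspace l" for w k
    using w MX[OF w] unfolding N_eq Xd by (auto intro!: ck_diff neumann_C2_cont)
  have phiX: "\<phi> \<in> Xspace l"
    unfolding Xd \<phi>_def using cf_C2[OF l_pos, of 1 j] cf_C2[OF l_pos, of "1 / E" j] by simp
  have pscale_phi: "pscale c \<phi> = (\<lambda>x. c * cf l j x, \<lambda>x. (c / E) * cf l j x)" for c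
    unfolding pscale_def \<phi>_def by simp
  have fl: "f0v + lam l j \<noteq> 0" using f0pos lj unfolding lj_def by simp
  have dl: "1 / D + lam l j \<noteq> 0" using Dp lj unfolding lj_def by (smt (verit))
  have M_phi: "M (pscale c \<phi>) = pscale c \<phi>" for c
  proof -
    have e1: "Fs (\<lambda>x. c * cf l j x) = (\<lambda>x. c / (f0v + lj) * cf l j x)"
      unfolding Fs_def lj_def by (rule inv_eq[OF f0pos l_pos cf_sol[OF l_pos fl]])
    have e2: "Fs (\<lambda>x. (c / E) * cf l j x) = (\<lambda>x. (c / E) / (f0v + lj) * cf l j x)"
      unfolding Fs_def lj_def by (rule inv_eq[OF f0pos l_pos cf_sol[OF l_pos fl]])
    have e3: "FF (\<lambda>x. c * cf l j x) = (\<lambda>x. c / (1 / D + lj) * cf l j x)"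
      unfolding FF_def lj_def by (rule inv_eq[OF Dp l_pos cf_sol[OF l_pos dl]])
    have q1: "2 * f0v * (c / (f0v + lj)) + f1v * ((c / E) / (f0v + lj)) = c"
    proof -
      have flj: "f0v + lj > 0" using f0pos lj by simp
      have f1E: "f1v = (lj - f0v) * E" using keyj E by (simp add: field_simps)
      have "f1v * ((c / E) / (f0v + lj)) = (lj - f0v) * c / (f0v + lj)" unfolding f1E using E by simp
      then show ?thesis using flj by (simp add: field_simps)
    qed
    have q2: "1 / D * (c / (1 / D + lj)) = c / E"
    proof -
      have "1 / D + lj = E / D" unfolding E_def using D_pos by (simp add: field_simps)
      then show ?thesis using D_pos E by simp
    qed
    have s1: "(\<lambda>x. 2 * f0v * (c / (f0v + lj) * cf l j x) + f1v * ((c / E) / (f0v + lj) * cf l j x)) = (\<lambda>x. c * cf l j x)"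
    proof
      fix x
      have "2 * f0v * (c / (f0v + lj) * cf l j x) + f1v * ((c / E) / (f0v + lj) * cf l j x)
          = (2 * f0v * (c / (f0v + lj)) + f1v * ((c / E) / (f0v + lj))) * cf l j x"
        by (simp only: distrib_right mult.assoc)
      then show "2 * f0v * (c / (f0v + lj) * cf l j x) + f1v * ((c / E) / (f0v + lj) * cf l j x) = c * cf l j x"
        by (simp only: q1)
    qed
    have s2: "(\<lambda>x. 1 / D * (c / (1 / D + lj) * cf l j x)) = (\<lambda>x. c / E * cf l j x)"
    proof
      fix x
      have "1 / D * (c / (1 / D + lj) * cf l j x) = (1 / D * (c / (1 / D + lj))) * cf l j x"
        by (simp only: mult.assoc)
      then show "1 / D * (c / (1 / D + lj) * cf l j x) = c / E * cf l j x" by (simp only: q2)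
    qed
    show ?thesis
      unfolding M_eq pscale_phi fst_conv snd_conv e1 e2 e3 s1 s2 ..
  qed
  have N_phi: "N (pscale c \<phi>) = pzero" for c
    unfolding N_eq M_phi by (simp add: pzero_def)
  have pscaleX: "pscale c \<phi> \<in> Xspace l" for c
    unfolding pscale_phi Xd using cf_C2[OF l_pos, of c j] cf_C2[OF l_pos, of "c / E" j] by simp
  have kernel: "w = pscale (2 * ck l (fst w) j / l) \<phi>" if w: "w \<in> Xspace l" and Nw: "N w = pzero" for w
  proof -
    define u where "u = fst w"
    define v where "v = snd w"
    have Mu: "fst (M w) = u" "snd (M w) = v"
      using Nw unfolding N_eq pzero_def u_def v_def by (auto simp: fun_eq_iff)
    have cu: "neumann_C2 l u" "neumann_C2 l v" using w unfolding Xd u_def v_def by auto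
    have ckv: "ck l v k * (1 + D * lam l k) = ck l u k" for k
      using M_ck2[OF w, of k] Mu unfolding u_def v_def by simp
    have cku: "ck l u k * ((\<sigma> - sig r r' D l k) / r 1) = 0" for k
    proof -
      have "ck l u k * (f0v + lam l k) = 2 * f0v * ck l u k + f1v * ck l v k"
        using M_ck1[OF w, of k] Mu unfolding u_def v_def by simp
      moreover have "ck l v k = ck l u k / (1 + D * lam l k)" using ckv[of k] Ek[of k]
        by (simp add: field_simps)
      ultimately have "ck l u k * (lam l k - f0v - f1v / (1 + D * lam l k)) = 0"
        by (simp add: algebra_simps)
      then show ?thesis unfolding key .
    qed
    have zero: "ck l u k = 0" "ck l v k = 0" if "k \<noteq> j" for k
    proof -
      have "\<sigma> - sig r r' D l k \<noteq> 0" using j_simple that unfolding \<sigma>_def by auto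
      then show "ck l u k = 0" using cku[of k] r1 by simp
      then show "ck l v k = 0" using ckv[of k] Ek[of k] by simp
    qed
    define a where "a = 2 * ck l u j / l"
    have cfc: "continuous_on {0..l} (cf l j)" by (rule cf_cont[OF l_pos])
    have h1: "u x - a * cf l j x = 0" if x: "x \<in> {0..l}" for x
    proof (rule cos_complete[OF l_pos _ _ x, of "\<lambda>x. u x - a * cf l j x"])
      show "continuous_on {0..l} (\<lambda>x. u x - a * cf l j x)"
        by (intro continuous_intros neumann_C2_cont cu cfc)
      show "\<forall>k. integral {0..l} (\<lambda>x. (u x - a * cf l j x) * cos (real k * pi * x / l)) = 0"
      proof
        fix k
        have "ck l (\<lambda>x. u x - a * cf l j x) k = ck l u k - a * ck l (cf l j) k"
          using ck_lin[OF neumann_C2_cont[OF cu(1)] cfc, of 1 "-a" k] by simp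
        also have "\<dots> = 0" using zero(1)[of k] l_pos unfolding ck_cf[OF l_pos j_pos] a_def by auto
        finally show "integral {0..l} (\<lambda>x. (u x - a * cf l j x) * cos (real k * pi * x / l)) = 0"
          unfolding ck_def .
      qed
    qed
    have h2: "v x - (a / E) * cf l j x = 0" if x: "x \<in> {0..l}" for x
    proof (rule cos_complete[OF l_pos _ _ x, of "\<lambda>x. v x - (a / E) * cf l j x"])
      show "continuous_on {0..l} (\<lambda>x. v x - (a / E) * cf l j x)"
        by (intro continuous_intros neumann_C2_cont cu cfc)
      show "\<forall>k. integral {0..l} (\<lambda>x. (v x - (a / E) * cf l j x) * cos (real k * pi * x / l)) = 0"
      proof
        fix k
        have "ck l (\<lambda>x. v x - (a / E) * cf l j x) k = ck l v k - (a / E) * ck l (cf l j) k"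
          using ck_lin[OF neumann_C2_cont[OF cu(2)] cfc, of 1 "-(a / E)" k] by simp
        also have "\<dots> = 0"
        proof (cases "k = j")
          case True
          have "ck l v j = ck l u j / E" using ckv[of j] E unfolding E_def lj_def by (simp add: field_simps)
          then show ?thesis using True l_pos E unfolding ck_cf[OF l_pos j_pos] a_def by simp
        next
          case False
          then show ?thesis using zero(2)[of k] unfolding ck_cf[OF l_pos j_pos] by simp
        qed
        finally show "integral {0..l} (\<lambda>x. (v x - (a / E) * cf l j x) * cos (real k * pi * x / l)) = 0"
          unfolding ck_def .
      qed
    qed
    have "u = (\<lambda>x. a * cf l j x)"
    proof
      fix x show "u x = a * cf l j x"
      proof (cases "x \<in> {0..l}")
        case True then show ?thesis using h1[OF True] by simp
      next
        case False
        then have "cf l j x = 0" unfolding cf_def by auto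
        moreover have "u x = 0" using cu(1) False unfolding neumann_C2_def by blast
        ultimately show ?thesis by simp
      qed
    qed
    moreover have "v = (\<lambda>x. (a / E) * cf l j x)"
    proof
      fix x show "v x = (a / E) * cf l j x"
      proof (cases "x \<in> {0..l}")
        case True then show ?thesis using h2[OF True] by simp
      next
        case False
        then have "cf l j x = 0" unfolding cf_def by auto
        moreover have "v x = 0" using cu(2) False unfolding neumann_C2_def by blast
        ultimately show ?thesis by simp
      qed
    qed
    ultimately have "w = pscale a \<phi>" unfolding pscale_phi u_def v_def by (simp add: prod_eq_iff)
    then show ?thesis unfolding a_def u_def .
  qed
  have gen: "N w = pzero" if w: "w \<in> Xspace l" and NNw: "N (N w) = pzero" for w
  proof -
    define b where "b = 2 * ck l (fst (N w)) j / l"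
    have z: "N w = pscale b \<phi>" unfolding b_def by (rule kernel[OF NX[OF w] NNw])
    define U where "U = ck l (fst w) j"
    define V where "V = ck l (snd w) j"
    define P where "P = ck l (fst (M w)) j"
    define Q where "Q = ck l (snd (M w)) j"
    have e1: "P * (f0v + lj) = 2 * f0v * U + f1v * V" using M_ck1[OF w, of j] unfolding P_def U_def V_def lj_def .
    have e2: "Q * E = U" using M_ck2[OF w, of j] unfolding Q_def U_def E_def lj_def .
    have e3: "U - P = b * (l / 2)"
      using N_ck(1)[OF w, of j] z ck_scale[OF cf_cont[OF l_pos], of b j] unfolding pscale_phi U_def P_def
      by (simp add: ck_cf[OF l_pos j_pos])
    have e4: "V - Q = (b / E) * (l / 2)"
      using N_ck(2)[OF w, of j] z ck_scale[OF cf_cont[OF l_pos], of "b / E" j] unfolding pscale_phi V_def Q_def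
      by (simp add: ck_cf[OF l_pos j_pos])
    have f1E: "f1v = (lj - f0v) * E" using keyj E by (simp add: field_simps)
    have "b * (l / 2) * (f0v + lj) = (U - P) * (f0v + lj)" using e3 by simp
    also have "\<dots> = U * (f0v + lj) - P * (f0v + lj)" by (simp add: algebra_simps)
    also have "\<dots> = U * (f0v + lj) - (2 * f0v * U + f1v * V)" using e1 by simp
    also have "V = U / E + (b / E) * (l / 2)" using e2 e4 E by (simp add: field_simps)
    finally have "b * (l / 2) * (f0v + lj) = U * (f0v + lj) - (2 * f0v * U + (lj - f0v) * E * (U / E + (b / E) * (l / 2)))"
      unfolding f1E .
    then have "b * (l / 2) * (f0v + lj) = - (lj - f0v) * (b * (l / 2))" using E by (simp add: field_simps)
    then have H0: "b * (l / 2) * (f0v + lj) + (lj - f0v) * (b * (l / 2)) = 0" by (simp only: mult_minus_left)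
    have "b * (l / 2) * (f0v + lj) + (lj - f0v) * (b * (l / 2)) = b * (l * lj)" by (simp add: field_simps)
    then have "b * (l * lj) = 0" using H0 by simp
    then have "b = 0" using l_pos lj by simp
    then show ?thesis using z by (simp add: pscale_def pzero_def)
  qed
  have Nk: "N w = pzero" if "w \<in> Xspace l" "(N ^^ Suc k) w = pzero" for k w
    using that
  proof (induction k arbitrary: w)
    case 0 then show ?case by simp
  next
    case (Suc k)
    have "(N ^^ Suc k) (N w) = pzero" using Suc.prems(2) by (simp only: funpow_Suc_right o_apply)
    then have "N (N w) = pzero" using Suc.IH[OF NX[OF Suc.prems(1)]] by blast
    then show ?case by (rule gen[OF Suc.prems(1)])
  qed
  have pzero_phi: "pzero = pscale 0 \<phi>" unfolding pzero_def pscale_def by simp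
  have Ndef: "(\<lambda>z. psub (pscale 1 z) (M z)) = N" unfolding N_def ..
  have GE: "gen_eigenspace (Xspace l) M 1 = range (\<lambda>c. pscale c \<phi>)"
  proof
    show "gen_eigenspace (Xspace l) M 1 \<subseteq> range (\<lambda>c. pscale c \<phi>)"
    proof
      fix w assume "w \<in> gen_eigenspace (Xspace l) M 1"
      then obtain k where w: "w \<in> Xspace l" and k: "(N ^^ k) w = pzero"
        unfolding gen_eigenspace_def Ndef by blast
      show "w \<in> range (\<lambda>c. pscale c \<phi>)"
      proof (cases k)
        case 0 then show ?thesis using k pzero_phi by auto
      next
        case (Suc k')
        then have "N w = pzero" using Nk[OF w] k by blast
        then show ?thesis using kernel[OF w] by blast
      qed
    qed
  next
    show "range (\<lambda>c. pscale c \<phi>) \<subseteq> gen_eigenspace (Xspace l) M 1"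
    proof
      fix w assume "w \<in> range (\<lambda>c. pscale c \<phi>)"
      then obtain c where c: "w = pscale c \<phi>" by blast
      have "(N ^^ 1) w = pzero" using N_phi c by simp
      then show "w \<in> gen_eigenspace (Xspace l) M 1"
        unfolding gen_eigenspace_def Ndef using pscaleX c by blast
    qed
  qed
  have phi0: "\<phi> \<noteq> pzero"
  proof
    assume "\<phi> = pzero"
    then have "cf l j 0 = 0" unfolding \<phi>_def pzero_def by simp
    then show False using l_pos unfolding cf_def by simp
  qed
  have p1: "pscale 1 \<phi> = \<phi>" unfolding pscale_def \<phi>_def by simp
  have "M \<phi> = pscale 1 \<phi>" using M_phi[of 1] unfolding p1 .
  then have ex: "\<exists>w\<in>Xspace l. w \<noteq> pzero \<and> M w = pscale 1 w" using phiX phi0 by blast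
  show ?thesis
    unfolding eigenvalue_alg_mult_one_def M_def[symmetric] \<sigma>_def[symmetric]
    using ex GE phi0 by blast
qed

end
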